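(* Let $\mathcal X=\mathcal X_1\times\cdots\times\mathcal X_b$, $\mathcal X_i=\mathbb R^{m_i\times n_i}$ with trace inner product and norms $\|\cdot\|_{(i)}$ (dual $\|\cdot\|_{(i)\star}$). Let $f$ be continuously differentiable and let $\mathcal D$ be a distribution on subsets of $[b]$. Assume constants $L^0_{i,S},L^1_{i,S}\ge0$ exist such that for all $S\in\operatorname{supp}(\mathcal D)$, $i\in S$, $X\in\mathcal X$ and $\Gamma$ with $\Gamma_j=0$ for $j\notin S$: $\|\nabla_if(X+\Gamma)-\nabla_if(X)\|_{(i)\star}\le(L^0_{i,S}+L^1_{i,S}\|\nabla_if(X)\|_{(i)\star})\|\Gamma_i\|_{(i)}$. Let $S^k\in\operatorname{supp}(\mathcal D)$, $X^k,M^k\in\mathcal X$, $t_i^k>0$, and define $X^{k+1}$ by $X_i^{k+1}=\operatorname{lmo}_{\mathcal B_i(X_i^k,t_i^k)}(M_i^k)$ for $i\in S^k$ and $X_i^{k+1}=X_i^k$ for $i\notin S^k$. Then $$f(X^{k+1})\le f(X^k)+\sum_{i\in S^k}2t_i^k\|\nabla_if(X^k)-M_i^k\|_{(i)\star}-\sum_{i\in S^k}t_i^k\|\nabla_if(X^k)\|_{(i)\star}+\sum_{i\in S^k}\frac{L^0_{i,S^k}+L^1_{i,S^k}\|\nabla_if(X^k)\|_{(i)\star}}2(t_i^k)^2.$$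
   Context: $\mathcal B_i(Y,t)=\{Z\in\mathcal X_i:\|Z-Y\|_{(i)}\le t\}$ and $\operatorname{lmo}_{\mathcal B}(M)\in\arg\min_{Z\in\mathcal B}\langle M,Z\rangle$. $\operatorname{supp}(\mathcal D)$ is the set of subsets of $[b]$ with positive probability. *)

theory Defs
  imports "HOL-Analysis.Analysis" "HOL-Probability.Probability_Mass_Function"
begin

text \<open>Matrices in R^{m x n} are represented as functions nat => nat => real that vanish
  outside the index range {..<m} x {..<n}.\<close>

definition Mat :: "nat \<Rightarrow> nat \<Rightarrow> (nat \<Rightarrow> nat \<Rightarrow> real) set" where
  "Mat m n = {A. \<forall>r c. (m \<le> r \<or> n \<le> c) \<longrightarrow> A r c = 0}"

definition tr_inner :: "nat \<Rightarrow> nat \<Rightarrow> (nat \<Rightarrow> nat \<Rightarrow> real) \<Rightarrow> (nat \<Rightarrow> nat \<Rightarrow> real) \<Rightarrow> real" where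
  "tr_inner m n A B = (\<Sum>r<m. \<Sum>c<n. A r c * B r c)"

definition is_norm_on :: "nat \<Rightarrow> nat \<Rightarrow> ((nat \<Rightarrow> nat \<Rightarrow> real) \<Rightarrow> real) \<Rightarrow> bool" where
  "is_norm_on m n N \<longleftrightarrow>
     (\<forall>A\<in>Mat m n. 0 \<le> N A \<and> (N A = 0 \<longleftrightarrow> A = (\<lambda>r c. 0))) \<and>
     (\<forall>A\<in>Mat m n. \<forall>a::real. N (\<lambda>r c. a * A r c) = \<bar>a\<bar> * N A) \<and>
     (\<forall>A\<in>Mat m n. \<forall>B\<in>Mat m n. N (\<lambda>r c. A r c + B r c) \<le> N A + N B)"

definition dual_norm :: "nat \<Rightarrow> nat \<Rightarrow> ((nat \<Rightarrow> nat \<Rightarrow> real) \<Rightarrow> real) \<Rightarrow> (nat \<Rightarrow> nat \<Rightarrow> real) \<Rightarrow> real" where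
  "dual_norm m n N G = Sup {tr_inner m n G Z | Z. Z \<in> Mat m n \<and> N Z \<le> 1}"

definition norm_ball :: "nat \<Rightarrow> nat \<Rightarrow> ((nat \<Rightarrow> nat \<Rightarrow> real) \<Rightarrow> real) \<Rightarrow> (nat \<Rightarrow> nat \<Rightarrow> real) \<Rightarrow> real \<Rightarrow> (nat \<Rightarrow> nat \<Rightarrow> real) set" where
  "norm_ball m n N Y t = {Z \<in> Mat m n. N (\<lambda>r c. Z r c - Y r c) \<le> t}"

definition is_lmo :: "nat \<Rightarrow> nat \<Rightarrow> (nat \<Rightarrow> nat \<Rightarrow> real) set \<Rightarrow> (nat \<Rightarrow> nat \<Rightarrow> real) \<Rightarrow> (nat \<Rightarrow> nat \<Rightarrow> real) \<Rightarrow> bool" where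
  "is_lmo m n B M Z \<longleftrightarrow> Z \<in> B \<and> (\<forall>W\<in>B. tr_inner m n M Z \<le> tr_inner m n M W)"

text \<open>Block structure of the product space X = X_0 x ... x X_{b-1}, realised as the
  Euclidean space real^'k: every coordinate k belongs to block blk k < b, and
  pos identifies the coordinates of block i bijectively with the entries of an
  m_i x n_i matrix.\<close>
definition block_structure :: "nat \<Rightarrow> (nat \<Rightarrow> nat) \<Rightarrow> (nat \<Rightarrow> nat) \<Rightarrow> ('k \<Rightarrow> nat) \<Rightarrow> ('k \<Rightarrow> nat \<times> nat) \<Rightarrow> bool" where
  "block_structure b m n blk pos \<longleftrightarrow>
     (\<forall>k. blk k < b) \<and>
     (\<forall>i<b. bij_betw pos {k. blk k = i} ({..<m i} \<times> {..<n i}))"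

definition block :: "('k \<Rightarrow> nat) \<Rightarrow> ('k \<Rightarrow> nat \<times> nat) \<Rightarrow> real^'k \<Rightarrow> nat \<Rightarrow> (nat \<Rightarrow> nat \<Rightarrow> real)" where
  "block blk pos X i = (\<lambda>r c. \<Sum>k\<in>{k. blk k = i \<and> pos k = (r, c)}. X $ k)"

definition grad :: "(real^'k \<Rightarrow> real) \<Rightarrow> real^'k \<Rightarrow> real^'k" where
  "grad f X = (\<chi> k. frechet_derivative f (at X) (axis k 1))"

end

theory Submission
  imports Defs
begin



lemma block_at:
  assumes bs: "block_structure b m n blk pos"
  shows "block blk pos A (blk k) (fst (pos k)) (snd (pos k)) = A $ k"
proof -
  have bij: "bij_betw pos {k'. blk k' = blk k} ({..<m (blk k)} \<times> {..<n (blk k)})"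
    using bs unfolding block_structure_def by auto
  hence inj: "inj_on pos {k'. blk k' = blk k}" by (rule bij_betw_imp_inj_on)
  have "{k'. blk k' = blk k \<and> pos k' = (fst (pos k), snd (pos k))} = {k}"
    using inj by (auto simp: inj_on_def)
  thus ?thesis unfolding block_def by simp
qed

lemma block_out:
  assumes bs: "block_structure b m n blk pos" and i: "i < b"
    and rc: "(r, c) \<notin> {..<m i} \<times> {..<n i}"
  shows "block blk pos A i r c = 0"
proof -
  have bij: "bij_betw pos {k'. blk k' = i} ({..<m i} \<times> {..<n i})"
    using bs i unfolding block_structure_def by auto
  have "{k. blk k = i \<and> pos k = (r, c)} = {}"
  proof (rule ccontr)
    assume "{k. blk k = i \<and> pos k = (r, c)} \<noteq> {}"
    then obtain k where "blk k = i" "pos k = (r, c)" by auto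
    hence "(r, c) \<in> pos ` {k'. blk k' = i}" by (metis (mono_tags) image_eqI mem_Collect_eq)
    thus False using bij rc unfolding bij_betw_def by simp
  qed
  thus ?thesis unfolding block_def by (subst \<open>_ = {}\<close>) simp
qed

lemma block_in:
  assumes bs: "block_structure b m n blk pos" and i: "i < b"
    and rc: "(r, c) \<in> {..<m i} \<times> {..<n i}"
  obtains k where "blk k = i" "pos k = (r, c)" "block blk pos A i r c = A $ k"
proof -
  have bij: "bij_betw pos {k'. blk k' = i} ({..<m i} \<times> {..<n i})"
    using bs i unfolding block_structure_def by auto
  then obtain k where k: "blk k = i" "pos k = (r, c)"
    using rc unfolding bij_betw_def by (metis (mono_tags, lifting) imageE mem_Collect_eq)
  have "block blk pos A i r c = A $ k"
    using block_at[OF bs, of A k] k by simp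
  with k that show ?thesis by blast
qed

lemma block_Mat:
  assumes bs: "block_structure b m n blk pos" and i: "i < b"
  shows "block blk pos A i \<in> Mat (m i) (n i)"
  unfolding Mat_def using block_out[OF bs i] by auto

lemma block_add: "block blk pos (A + B) i = (\<lambda>r c. block blk pos A i r c + block blk pos B i r c)"
  unfolding block_def by (simp add: sum.distrib)

lemma block_diff: "block blk pos (A - B) i = (\<lambda>r c. block blk pos A i r c - block blk pos B i r c)"
  unfolding block_def by (simp add: sum_subtractf)

lemma block_scale: "block blk pos (s *\<^sub>R A) i = (\<lambda>r c. s * block blk pos A i r c)"
  unfolding block_def by (simp add: sum_distrib_left)

lemma block_zero: "block blk pos 0 i = (\<lambda>r c. 0)"
  unfolding block_def by simp

lemma tr_block:
  assumes bs: "block_structure b m n blk pos" and i: "i < b"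
  shows "tr_inner (m i) (n i) (block blk pos A i) (block blk pos B i)
     = (\<Sum>k\<in>{k. blk k = i}. A $ k * B $ k)"
proof -
  have bij: "bij_betw pos {k'. blk k' = i} ({..<m i} \<times> {..<n i})"
    using bs i unfolding block_structure_def by auto
  have "tr_inner (m i) (n i) (block blk pos A i) (block blk pos B i)
      = (\<Sum>p\<in>{..<m i} \<times> {..<n i}. block blk pos A i (fst p) (snd p) * block blk pos B i (fst p) (snd p))"
    unfolding tr_inner_def by (simp add: sum.cartesian_product case_prod_beta)
  also have "\<dots> = (\<Sum>k\<in>{k. blk k = i}. block blk pos A i (fst (pos k)) (snd (pos k)) * block blk pos B i (fst (pos k)) (snd (pos k)))"
    using sum.reindex_bij_betw[OF bij, of "\<lambda>p. block blk pos A i (fst p) (snd p) * block blk pos B i (fst p) (snd p)"]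
    by simp
  also have "\<dots> = (\<Sum>k\<in>{k. blk k = i}. A $ k * B $ k)"
    by (rule sum.cong) (auto simp: block_at[OF bs, symmetric])
  finally show ?thesis .
qed

lemma inner_split:
  assumes bs: "block_structure b m n blk pos" and Sb: "S \<subseteq> {..<b}"
    and G: "\<forall>k. blk k \<notin> S \<longrightarrow> G $ k = 0"
  shows "(\<Sum>k\<in>UNIV. A $ k * (G::real^'k::finite) $ k)
     = (\<Sum>i\<in>S. tr_inner (m i) (n i) (block blk pos A i) (block blk pos G i))"
proof -
  have fS: "finite S" using Sb finite_subset by blast
  have "(\<Sum>k\<in>UNIV. A $ k * G $ k) = (\<Sum>k\<in>{k. blk k \<in> S}. A $ k * G $ k)"
    by (rule sum.mono_neutral_right) (use G in auto)
  also have "\<dots> = (\<Sum>i\<in>S. \<Sum>k\<in>{k \<in> {k. blk k \<in> S}. blk k = i}. A $ k * G $ k)"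
    by (rule sum.group[symmetric]) (use fS in auto)
  also have "\<dots> = (\<Sum>i\<in>S. tr_inner (m i) (n i) (block blk pos A i) (block blk pos G i))"
    by (rule sum.cong) (use Sb in \<open>auto simp: tr_block[OF bs] intro!: sum.cong\<close>)
  finally show ?thesis .
qed




lemma Mat_add: "A \<in> Mat m n \<Longrightarrow> B \<in> Mat m n \<Longrightarrow> (\<lambda>r c. A r c + B r c) \<in> Mat m n"
  unfolding Mat_def by auto
lemma Mat_diff: "A \<in> Mat m n \<Longrightarrow> B \<in> Mat m n \<Longrightarrow> (\<lambda>r c. A r c - B r c) \<in> Mat m n"
  unfolding Mat_def by auto
lemma Mat_scale: "A \<in> Mat m n \<Longrightarrow> (\<lambda>r c. a * A r c) \<in> Mat m n"
  unfolding Mat_def by auto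
lemma Mat_zero: "(\<lambda>r c. 0) \<in> Mat m n"
  unfolding Mat_def by auto
lemma Mat_sum: "finite F \<Longrightarrow> (\<forall>k\<in>F. E k \<in> Mat m n) \<Longrightarrow> (\<lambda>r c. \<Sum>k\<in>F. a k * E k r c) \<in> Mat m n"
  unfolding Mat_def by auto

lemma N_nonneg: "is_norm_on m n N \<Longrightarrow> A \<in> Mat m n \<Longrightarrow> 0 \<le> N A"
  unfolding is_norm_on_def by auto
lemma N_zero_iff: "is_norm_on m n N \<Longrightarrow> A \<in> Mat m n \<Longrightarrow> N A = 0 \<longleftrightarrow> A = (\<lambda>r c. 0)"
  unfolding is_norm_on_def by auto
lemma N_scale: "is_norm_on m n N \<Longrightarrow> A \<in> Mat m n \<Longrightarrow> N (\<lambda>r c. a * A r c) = \<bar>a\<bar> * N A"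
  unfolding is_norm_on_def by auto
lemma N_tri: "is_norm_on m n N \<Longrightarrow> A \<in> Mat m n \<Longrightarrow> B \<in> Mat m n \<Longrightarrow> N (\<lambda>r c. A r c + B r c) \<le> N A + N B"
  unfolding is_norm_on_def by auto
lemma N_zero: "is_norm_on m n N \<Longrightarrow> N (\<lambda>r c. 0) = 0"
  using N_zero_iff[OF _ Mat_zero] by blast
lemma N_neg: "is_norm_on m n N \<Longrightarrow> A \<in> Mat m n \<Longrightarrow> N (\<lambda>r c. - A r c) = N A"
  using N_scale[of m n N A "-1"] by simp

lemma N_sum:
  assumes N: "is_norm_on m n N" and F: "finite F"
  shows "(\<forall>k\<in>F. E k \<in> Mat m n) \<Longrightarrow> N (\<lambda>r c. \<Sum>k\<in>F. a k * E k r c) \<le> (\<Sum>k\<in>F. \<bar>a k\<bar> * N (E k))"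
  using F
proof (induction F rule: finite_induct)
  case empty
  then show ?case using N_zero[OF N] by simp
next
  case (insert x F)
  have "N (\<lambda>r c. \<Sum>k\<in>insert x F. a k * E k r c) = N (\<lambda>r c. a x * E x r c + (\<Sum>k\<in>F. a k * E k r c))"
    using insert by simp
  also have "\<dots> \<le> N (\<lambda>r c. a x * E x r c) + N (\<lambda>r c. \<Sum>k\<in>F. a k * E k r c)"
    by (rule N_tri[OF N]) (use insert in \<open>auto intro: Mat_scale Mat_sum\<close>)
  also have "\<dots> \<le> \<bar>a x\<bar> * N (E x) + (\<Sum>k\<in>F. \<bar>a k\<bar> * N (E k))"
    using insert N_scale[OF N] by auto
  finally show ?case using insert by simp
qed

definition lift :: "('k \<Rightarrow> nat) \<Rightarrow> ('k \<Rightarrow> nat \<times> nat) \<Rightarrow> nat \<Rightarrow> (nat \<Rightarrow> nat \<Rightarrow> real) \<Rightarrow> real^'k" where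
  "lift blk pos i Z = (\<chi> k. if blk k = i then Z (fst (pos k)) (snd (pos k)) else 0)"

lemma block_lift:
  assumes bs: "block_structure b m n blk pos" and i: "i < b" and Z: "Z \<in> Mat (m i) (n i)"
  shows "block blk pos (lift blk pos i Z) i = Z"
proof (intro ext)
  fix r c
  show "block blk pos (lift blk pos i Z) i r c = Z r c"
  proof (cases "(r, c) \<in> {..<m i} \<times> {..<n i}")
    case True
    then obtain k where "blk k = i" "pos k = (r, c)" "block blk pos (lift blk pos i Z) i r c = lift blk pos i Z $ k"
      using block_in[OF bs i] by blast
    then show ?thesis by (simp add: lift_def)
  next
    case False
    then show ?thesis using block_out[OF bs i False] Z unfolding Mat_def by auto
  qed
qed

lemma block_expand:
  "block blk pos (w::real^'k::finite) i = (\<lambda>r c. \<Sum>k\<in>UNIV. w $ k * block blk pos (axis k 1) i r c)"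
proof (intro ext)
  fix r c
  have e: "w $ k' = (\<Sum>k\<in>UNIV. w $ k * axis k 1 $ k')" for k'
  proof -
    have "(\<Sum>k\<in>UNIV. w $ k * axis k 1 $ k') = (\<Sum>k\<in>UNIV. if k' = k then w $ k else 0)"
      by (rule sum.cong) (auto simp: axis_def)
    thus ?thesis by simp
  qed
  have "block blk pos w i r c = (\<Sum>k'\<in>{k. blk k = i \<and> pos k = (r, c)}. \<Sum>k\<in>UNIV. w $ k * axis k 1 $ k')"
    unfolding block_def by (rule sum.cong[OF refl], rule e)
  also have "\<dots> = (\<Sum>k\<in>UNIV. \<Sum>k'\<in>{k. blk k = i \<and> pos k = (r, c)}. w $ k * axis k 1 $ k')"
    by (rule sum.swap)
  also have "\<dots> = (\<Sum>k\<in>UNIV. w $ k * block blk pos (axis k 1) i r c)"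
    unfolding block_def by (simp add: sum_distrib_left)
  finally show "block blk pos w i r c = (\<Sum>k\<in>UNIV. w $ k * block blk pos (axis k 1) i r c)" .
qed

lemma h_bound:
  assumes bs: "block_structure b m n blk pos" and i: "i < b" and N: "is_norm_on (m i) (n i) N"
  shows "N (block blk pos (w::real^'k::finite) i) \<le> (\<Sum>k\<in>UNIV. N (block blk pos (axis k 1) i)) * norm w"
proof -
  have "N (block blk pos w i) \<le> (\<Sum>k\<in>UNIV. \<bar>w $ k\<bar> * N (block blk pos (axis k 1) i))"
    unfolding block_expand[of blk pos w i]
    by (rule N_sum[OF N]) (auto intro: block_Mat[OF bs i])
  also have "\<dots> \<le> (\<Sum>k\<in>UNIV. norm w * N (block blk pos (axis k 1) i))"
    by (rule sum_mono, rule mult_right_mono) (auto simp: component_le_norm_cart intro: N_nonneg[OF N] block_Mat[OF bs i])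
  finally show ?thesis by (simp add: sum_distrib_left mult.commute)
qed

lemma h_lip:
  assumes bs: "block_structure b m n blk pos" and i: "i < b" and N: "is_norm_on (m i) (n i) N"
  shows "\<bar>N (block blk pos (u::real^'k::finite) i) - N (block blk pos v i)\<bar>
     \<le> (\<Sum>k\<in>UNIV. N (block blk pos (axis k 1) i)) * norm (u - v)"
proof -
  have M: "block blk pos w i \<in> Mat (m i) (n i)" for w :: "real^'k" using block_Mat[OF bs i] .
  have t: "N (block blk pos x i) \<le> N (block blk pos y i) + N (block blk pos (x - y) i)" for x y :: "real^'k"
  proof -
    have "block blk pos x i = (\<lambda>r c. block blk pos y i r c + block blk pos (x - y) i r c)"
      using block_add[of blk pos y "x - y" i] by simp
    thus ?thesis using N_tri[OF N M M] by metis
  qed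
  have s: "N (block blk pos (v - u) i) = N (block blk pos (u - v) i)"
  proof -
    have "block blk pos (v - u) i = (\<lambda>r c. - block blk pos (u - v) i r c)"
      using block_scale[of blk pos "-1" "u - v" i] by simp
    thus ?thesis using N_neg[OF N M] by simp
  qed
  show ?thesis using t[of u v] t[of v u] s h_bound[OF bs i N, of "u - v"] by linarith
qed

lemma h_cont:
  assumes bs: "block_structure b m n blk pos" and i: "i < b" and N: "is_norm_on (m i) (n i) N"
  shows "continuous_on UNIV (\<lambda>w::real^'k::finite. N (block blk pos w i))"
proof -
  define C where "C = (\<Sum>k\<in>UNIV. N (block blk pos (axis k 1) i))"
  have C0: "0 \<le> C" unfolding C_def by (rule sum_nonneg) (auto intro: N_nonneg[OF N] block_Mat[OF bs i])
  show ?thesis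
    unfolding continuous_on_iff
  proof (intro ballI allI impI)
    fix x :: "real^'k" and e :: real assume e: "0 < e"
    show "\<exists>d>0. \<forall>x'\<in>UNIV. dist x' x < d \<longrightarrow> dist (N (block blk pos x' i)) (N (block blk pos x i)) < e"
    proof (intro exI[of _ "e / (C + 1)"] conjI ballI impI)
      show "0 < e / (C + 1)" using e C0 by simp
      fix x' :: "real^'k" assume d: "dist x' x < e / (C + 1)"
      have "dist (N (block blk pos x' i)) (N (block blk pos x i)) \<le> C * norm (x' - x)"
        using h_lip[OF bs i N, of x' x] by (simp add: dist_real_def C_def)
      also have "\<dots> \<le> (C + 1) * norm (x' - x)" by (simp add: mult_right_mono)
      also have "\<dots> < (C + 1) * (e / (C + 1))"
        using d C0 by (intro mult_strict_left_mono) (auto simp: dist_norm)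
      also have "\<dots> = e" using C0 by simp
      finally show "dist (N (block blk pos x' i)) (N (block blk pos x i)) < e" .
    qed
  qed
qed




lemma coercive:
  assumes bs: "block_structure b m n blk pos" and i: "i < b" and N: "is_norm_on (m i) (n i) N"
  shows "\<exists>K. \<forall>Z\<in>Mat (m i) (n i). N Z \<le> 1 \<longrightarrow> norm (lift blk pos i Z :: real^'k::finite) \<le> K"
proof -
  define Sub where "Sub = {v::real^'k. \<forall>k. blk k \<noteq> i \<longrightarrow> v $ k = 0}"
  define h where "h = (\<lambda>w::real^'k. N (block blk pos w i))"
  have clS: "closed Sub" unfolding Sub_def
    by (intro closed_Collect_all closed_Collect_imp closed_Collect_eq continuous_intros) auto
  define T where "T = sphere (0::real^'k) 1 \<inter> Sub"
  have cT: "compact T" unfolding T_def using clS by (intro compact_Int_closed) auto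
  have liftS: "lift blk pos i Z \<in> Sub" for Z unfolding Sub_def lift_def by auto
  have scS: "v \<in> Sub \<Longrightarrow> a *\<^sub>R v \<in> Sub" for v a unfolding Sub_def by auto
  have hlift: "Z \<in> Mat (m i) (n i) \<Longrightarrow> h (lift blk pos i Z) = N Z" for Z
    unfolding h_def using block_lift[OF bs i] by simp
  have M: "block blk pos w i \<in> Mat (m i) (n i)" for w :: "real^'k" using block_Mat[OF bs i] .
  have hsc: "h (a *\<^sub>R w) = \<bar>a\<bar> * h w" for a w
    unfolding h_def block_scale using N_scale[OF N M] by simp
  show ?thesis
  proof (cases "T = {}")
    case True
    have "v = 0" if "v \<in> Sub" for v
    proof (rule ccontr)
      assume "v \<noteq> 0"
      hence "(1 / norm v) *\<^sub>R v \<in> T" unfolding T_def using scS[OF that] by auto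
      thus False using True by auto
    qed
    hence "\<forall>Z\<in>Mat (m i) (n i). N Z \<le> 1 \<longrightarrow> norm (lift blk pos i Z :: real^'k) \<le> 0"
      using liftS by auto
    thus ?thesis by blast
  next
    case False
    have hc: "continuous_on T h" unfolding h_def
      using h_cont[OF bs i N] continuous_on_subset by blast
    obtain x where xT: "x \<in> T" and xmin: "\<forall>y\<in>T. h x \<le> h y"
      using continuous_attains_inf[OF cT False hc] by blast
    have "x \<noteq> 0" using xT unfolding T_def by auto
    then obtain k where k: "x $ k \<noteq> 0" by (metis vec_eq_iff zero_index)
    have bk: "blk k = i" using k xT unfolding T_def Sub_def by auto
    have "block blk pos x i \<noteq> (\<lambda>r c. 0)"
    proof
      assume "block blk pos x i = (\<lambda>r c. 0)"
      hence "block blk pos x (blk k) (fst (pos k)) (snd (pos k)) = 0" using bk by simp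
      thus False using block_at[OF bs] k by simp
    qed
    hence cpos: "0 < h x" unfolding h_def using N_zero_iff[OF N M] N_nonneg[OF N M]
      by (metis less_eq_real_def)
    show ?thesis
    proof (intro exI[of _ "1 / h x"] ballI impI)
      fix Z assume Z: "Z \<in> Mat (m i) (n i)" and NZ: "N Z \<le> 1"
      define v where "v = (lift blk pos i Z :: real^'k)"
      show "norm v \<le> 1 / h x"
      proof (cases "v = 0")
        case True thus ?thesis using cpos by simp
      next
        case False
        hence nv: "0 < norm v" by simp
        have "(1 / norm v) *\<^sub>R v \<in> T" unfolding T_def v_def using scS[OF liftS] False v_def by auto
        hence "h x \<le> h ((1 / norm v) *\<^sub>R v)" using xmin by blast
        also have "\<dots> = N Z / norm v" using hsc hlift[OF Z] v_def nv by simp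
        finally have "h x * norm v \<le> N Z" using nv by (simp add: field_simps)
        hence "h x * norm v \<le> 1" using NZ by linarith
        thus ?thesis using cpos by (simp add: field_simps mult.commute)
      qed
    qed
  qed
qed

lemma tr_inner_scale_right: "tr_inner m n G (\<lambda>r c. a * Z r c) = a * tr_inner m n G Z"
  unfolding tr_inner_def by (simp add: sum_distrib_left algebra_simps)
lemma tr_inner_diff_right: "tr_inner m n G (\<lambda>r c. A r c - B r c) = tr_inner m n G A - tr_inner m n G B"
  unfolding tr_inner_def by (simp add: sum_subtractf algebra_simps)
lemma tr_inner_diff_left: "tr_inner m n (\<lambda>r c. A r c - B r c) Z = tr_inner m n A Z - tr_inner m n B Z"
  unfolding tr_inner_def by (simp add: sum_subtractf algebra_simps)
lemma tr_inner_zero_right: "tr_inner m n G (\<lambda>r c. 0) = 0"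
  unfolding tr_inner_def by simp

lemma dn_bdd:
  fixes blk :: "'k::finite \<Rightarrow> nat"
  assumes bs: "block_structure b m n blk pos" and i: "i < b" and N: "is_norm_on (m i) (n i) N"
    and G: "G \<in> Mat (m i) (n i)"
  shows "bdd_above {tr_inner (m i) (n i) G Z | Z. Z \<in> Mat (m i) (n i) \<and> N Z \<le> 1}"
proof -
  obtain K where K: "\<forall>Z\<in>Mat (m i) (n i). N Z \<le> 1 \<longrightarrow> norm (lift blk pos i Z :: real^'k::finite) \<le> K"
    using coercive[OF bs i N] by blast
  define g where "g = (lift blk pos i G :: real^'k)"
  show ?thesis unfolding bdd_above_def
  proof (intro exI[of _ "(\<Sum>k\<in>UNIV. \<bar>g $ k\<bar>) * K"] ballI)
    fix y assume "y \<in> {tr_inner (m i) (n i) G Z | Z. Z \<in> Mat (m i) (n i) \<and> N Z \<le> 1}"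
    then obtain Z where Z: "Z \<in> Mat (m i) (n i)" "N Z \<le> 1" and y: "y = tr_inner (m i) (n i) G Z" by blast
    define v where "v = (lift blk pos i Z :: real^'k)"
    have nv: "norm v \<le> K" using K Z v_def by blast
    have "y = (\<Sum>k\<in>{k. blk k = i}. g $ k * v $ k)"
      unfolding y using tr_block[OF bs i, of g v] block_lift[OF bs i Z(1)] block_lift[OF bs i G]
      by (simp add: g_def v_def)
    also have "\<dots> \<le> (\<Sum>k\<in>{k. blk k = i}. \<bar>g $ k\<bar> * K)"
    proof (rule sum_mono)
      fix k
      have "g $ k * v $ k \<le> \<bar>g $ k\<bar> * \<bar>v $ k\<bar>" by (simp add: abs_mult[symmetric])
      also have "\<dots> \<le> \<bar>g $ k\<bar> * K"
        using component_le_norm_cart[of v k] nv by (intro mult_left_mono) auto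
      finally show "g $ k * v $ k \<le> \<bar>g $ k\<bar> * K" .
    qed
    also have "\<dots> \<le> (\<Sum>k\<in>UNIV. \<bar>g $ k\<bar> * K)"
    proof (rule sum_mono2)
      have K0: "0 \<le> K" using nv norm_ge_zero[of v] by linarith
      thus "\<And>b. b \<in> UNIV - {k. blk k = i} \<Longrightarrow> 0 \<le> \<bar>g $ b\<bar> * K" by simp
    qed auto
    finally show "y \<le> (\<Sum>k\<in>UNIV. \<bar>g $ k\<bar>) * K" by (simp add: sum_distrib_right)
  qed
qed

lemma dn_upper:
  fixes blk :: "'k::finite \<Rightarrow> nat"
  assumes bs: "block_structure b m n blk pos" and i: "i < b" and N: "is_norm_on (m i) (n i) N"
    and G: "G \<in> Mat (m i) (n i)" and Z: "Z \<in> Mat (m i) (n i)" "N Z \<le> 1"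
  shows "tr_inner (m i) (n i) G Z \<le> dual_norm (m i) (n i) N G"
  unfolding dual_norm_def by (rule cSup_upper) (use Z dn_bdd[OF bs i N G] in auto)

lemma dn_nonneg:
  fixes blk :: "'k::finite \<Rightarrow> nat"
  assumes bs: "block_structure b m n blk pos" and i: "i < b" and N: "is_norm_on (m i) (n i) N"
    and G: "G \<in> Mat (m i) (n i)"
  shows "0 \<le> dual_norm (m i) (n i) N G"
  using dn_upper[OF bs i N G Mat_zero] N_zero[OF N] tr_inner_zero_right by simp

lemma dn_mult:
  fixes blk :: "'k::finite \<Rightarrow> nat"
  assumes bs: "block_structure b m n blk pos" and i: "i < b" and N: "is_norm_on (m i) (n i) N"
    and G: "G \<in> Mat (m i) (n i)" and Z: "Z \<in> Mat (m i) (n i)"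
  shows "tr_inner (m i) (n i) G Z \<le> dual_norm (m i) (n i) N G * N Z"
proof (cases "N Z = 0")
  case True
  hence "Z = (\<lambda>r c. 0)" using N_zero_iff[OF N Z] by simp
  thus ?thesis using tr_inner_zero_right N_zero[OF N] by simp
next
  case False
  hence pos: "0 < N Z" using N_nonneg[OF N Z] by simp
  have "N (\<lambda>r c. (1 / N Z) * Z r c) = 1" using N_scale[OF N Z, of "1 / N Z"] pos by simp
  hence "tr_inner (m i) (n i) G (\<lambda>r c. (1 / N Z) * Z r c) \<le> dual_norm (m i) (n i) N G"
    using dn_upper[OF bs i N G Mat_scale[OF Z], of "1 / N Z"] by simp
  hence "(1 / N Z) * tr_inner (m i) (n i) G Z \<le> dual_norm (m i) (n i) N G"
    by (simp only: tr_inner_scale_right)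
  thus ?thesis using pos by (simp add: field_simps)
qed

lemma dn_least:
  assumes "\<forall>Z\<in>Mat m n. N Z \<le> 1 \<longrightarrow> tr_inner m n G Z \<le> B" and N: "is_norm_on m n N"
  shows "dual_norm m n N G \<le> B"
  unfolding dual_norm_def
proof (rule cSup_least)
  show "{tr_inner m n G Z |Z. Z \<in> Mat m n \<and> N Z \<le> 1} \<noteq> {}"
    using Mat_zero N_zero[OF N] by fastforce
qed (use assms in auto)




lemma deriv_grad:
  fixes f :: "real^'k::finite \<Rightarrow> real"
  assumes "f differentiable (at Y)"
  shows "frechet_derivative f (at Y) G = (\<Sum>k\<in>UNIV. grad f Y $ k * G $ k)"
proof -
  have lin: "linear (frechet_derivative f (at Y))"
    using frechet_derivative_works assms has_derivative_linear by blast
  have "G = (\<Sum>k\<in>UNIV. G $ k *\<^sub>R axis k 1)"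
    using basis_expansion[of G] by (simp add: scalar_mult_eq_scaleR)
  hence "frechet_derivative f (at Y) G = frechet_derivative f (at Y) (\<Sum>k\<in>UNIV. G $ k *\<^sub>R axis k 1)"
    by simp
  also have "\<dots> = (\<Sum>k\<in>UNIV. G $ k * frechet_derivative f (at Y) (axis k 1))"
    using lin by (simp add: linear_sum linear_scale)
  finally show ?thesis unfolding grad_def by (simp add: mult.commute)
qed

lemma descent:
  fixes blk :: "'k::finite \<Rightarrow> nat" and f :: "real^'k \<Rightarrow> real"
    and L0 L1 :: "nat \<Rightarrow> real"
  assumes bs: "block_structure b m n blk pos"
    and norms: "\<forall>i<b. is_norm_on (m i) (n i) (nrm i)"
    and diff: "\<forall>X. f differentiable (at X)"
    and Sb: "S \<subseteq> {..<b}"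
    and Lnn: "\<forall>i\<in>S. 0 \<le> L0 i \<and> 0 \<le> L1 i"
    and smooth: "\<forall>i\<in>S. \<forall>X \<Gamma>. (\<forall>k. blk k \<notin> S \<longrightarrow> \<Gamma> $ k = 0) \<longrightarrow>
        dual_norm (m i) (n i) (nrm i)
          (\<lambda>r c. block blk pos (grad f (X + \<Gamma>)) i r c - block blk pos (grad f X) i r c)
        \<le> (L0 i + L1 i * dual_norm (m i) (n i) (nrm i) (block blk pos (grad f X) i))
           * nrm i (block blk pos \<Gamma> i)"
    and G: "\<forall>k. blk k \<notin> S \<longrightarrow> \<Gamma> $ k = 0"
  shows "f (X + \<Gamma>) \<le> f X + (\<Sum>i\<in>S. tr_inner (m i) (n i) (block blk pos (grad f X) i) (block blk pos \<Gamma> i))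
     + (\<Sum>i\<in>S. (L0 i + L1 i * dual_norm (m i) (n i) (nrm i) (block blk pos (grad f X) i)) / 2
            * (nrm i (block blk pos \<Gamma> i))^2)"
proof -
  define A where "A = (\<Sum>i\<in>S. tr_inner (m i) (n i) (block blk pos (grad f X) i) (block blk pos \<Gamma> i))"
  define c where "c = (\<lambda>i. L0 i + L1 i * dual_norm (m i) (n i) (nrm i) (block blk pos (grad f X) i))"
  define C where "C = (\<Sum>i\<in>S. c i * (nrm i (block blk pos \<Gamma> i))^2)"
  define phi where "phi = (\<lambda>s. f (X + s *\<^sub>R \<Gamma>) - s * A - s^2 / 2 * C)"
  define dphi where "dphi = (\<lambda>s. frechet_derivative f (at (X + s *\<^sub>R \<Gamma>)) \<Gamma> - A - s * C)"
  have A_eq: "A = (\<Sum>k\<in>UNIV. grad f X $ k * \<Gamma> $ k)"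
    unfolding A_def using inner_split[OF bs Sb G] by simp
  have deriv: "(phi has_real_derivative dphi s) (at s)" for s
  proof -
    define Y where "Y = X + s *\<^sub>R \<Gamma>"
    have fd: "(f has_derivative frechet_derivative f (at Y)) (at Y)"
      using diff frechet_derivative_works by blast
    have lin: "linear (frechet_derivative f (at Y))" using fd has_derivative_linear by blast
    have pd: "((\<lambda>s. X + s *\<^sub>R \<Gamma>) has_derivative (\<lambda>h. h *\<^sub>R \<Gamma>)) (at s)"
      by (auto intro!: derivative_eq_intros)
    have "((\<lambda>s. f (X + s *\<^sub>R \<Gamma>)) has_derivative (\<lambda>h. frechet_derivative f (at Y) (h *\<^sub>R \<Gamma>))) (at s)"
      using has_derivative_compose[OF pd, of f "frechet_derivative f (at Y)"] fd unfolding Y_def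
      by (simp add: o_def)
    hence d1: "((\<lambda>s. f (X + s *\<^sub>R \<Gamma>)) has_real_derivative frechet_derivative f (at Y) \<Gamma>) (at s)"
      by (rule has_derivative_imp_has_field_derivative) (simp add: linear_scale[OF lin])
    have d2: "((\<lambda>s. s * A) has_real_derivative A) (at s)"
      by (auto intro!: derivative_eq_intros)
    have d3: "((\<lambda>s. s^2 / 2 * C) has_real_derivative s * C) (at s)"
      by (auto intro!: derivative_eq_intros simp: field_simps)
    have "(phi has_real_derivative (frechet_derivative f (at Y) \<Gamma> - A - s * C)) (at s)"
      unfolding phi_def by (intro DERIV_diff d1 d2 d3)
    thus ?thesis unfolding dphi_def Y_def by simp
  qed
  have dneg: "dphi s \<le> 0" if s: "s \<in> {0..1}" for s
  proof -
    define Y where "Y = X + s *\<^sub>R \<Gamma>"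
    have "frechet_derivative f (at Y) \<Gamma> - A = (\<Sum>k\<in>UNIV. (grad f Y - grad f X) $ k * \<Gamma> $ k)"
      unfolding A_eq deriv_grad[OF diff[rule_format]] by (simp add: sum_subtractf algebra_simps)
    also have "\<dots> = (\<Sum>i\<in>S. tr_inner (m i) (n i) (block blk pos (grad f Y - grad f X) i) (block blk pos \<Gamma> i))"
      by (rule inner_split[OF bs Sb G])
    also have "\<dots> \<le> (\<Sum>i\<in>S. s * (c i * (nrm i (block blk pos \<Gamma> i))^2))"
    proof (rule sum_mono)
      fix i assume iS: "i \<in> S"
      have i: "i < b" using iS Sb by auto
      have N: "is_norm_on (m i) (n i) (nrm i)" using norms i by auto
      have M: "block blk pos w i \<in> Mat (m i) (n i)" for w :: "real^'k" using block_Mat[OF bs i] .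
      have c0: "0 \<le> c i" unfolding c_def using Lnn iS dn_nonneg[OF bs i N M] by auto
      have sG: "\<forall>k. blk k \<notin> S \<longrightarrow> (s *\<^sub>R \<Gamma>) $ k = 0" using G by simp
      have sm: "dual_norm (m i) (n i) (nrm i) (block blk pos (grad f Y - grad f X) i)
          \<le> c i * nrm i (block blk pos (s *\<^sub>R \<Gamma>) i)"
        using smooth iS sG unfolding c_def Y_def block_diff by blast
      have ns: "nrm i (block blk pos (s *\<^sub>R \<Gamma>) i) = s * nrm i (block blk pos \<Gamma> i)"
        unfolding block_scale using N_scale[OF N M] s by simp
      have nn: "0 \<le> nrm i (block blk pos \<Gamma> i)" using N_nonneg[OF N M] .
      have "tr_inner (m i) (n i) (block blk pos (grad f Y - grad f X) i) (block blk pos \<Gamma> i)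
          \<le> dual_norm (m i) (n i) (nrm i) (block blk pos (grad f Y - grad f X) i) * nrm i (block blk pos \<Gamma> i)"
        by (rule dn_mult[OF bs i N M M])
      also have "\<dots> \<le> c i * (s * nrm i (block blk pos \<Gamma> i)) * nrm i (block blk pos \<Gamma> i)"
        using sm ns nn by (simp add: mult_right_mono)
      also have "\<dots> = s * (c i * (nrm i (block blk pos \<Gamma> i))^2)" by (simp add: power2_eq_square)
      finally show "tr_inner (m i) (n i) (block blk pos (grad f Y - grad f X) i) (block blk pos \<Gamma> i)
          \<le> s * (c i * (nrm i (block blk pos \<Gamma> i))^2)" .
    qed
    also have "\<dots> = s * C" unfolding C_def by (simp add: sum_distrib_left)
    finally show ?thesis unfolding dphi_def Y_def by simp
  qed
  have "phi 1 \<le> phi 0"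
    by (rule deriv_nonpos_imp_antimono[of 0 1 phi dphi]) (use deriv dneg in auto)
  hence "f (X + \<Gamma>) - A - C / 2 \<le> f X" unfolding phi_def by simp
  moreover have "C / 2 = (\<Sum>i\<in>S. c i / 2 * (nrm i (block blk pos \<Gamma> i))^2)"
    unfolding C_def by (simp add: sum_divide_distrib)
  ultimately show ?thesis unfolding A_def c_def by simp
qed




theorem lemma6:
  fixes b :: nat and m n :: "nat \<Rightarrow> nat"
    and blk :: "'k::finite \<Rightarrow> nat" and pos :: "'k \<Rightarrow> nat \<times> nat"
    and nrm :: "nat \<Rightarrow> (nat \<Rightarrow> nat \<Rightarrow> real) \<Rightarrow> real"
    and f :: "real^'k \<Rightarrow> real"
    and D :: "nat set pmf"
    and L0 L1 :: "nat \<Rightarrow> nat set \<Rightarrow> real"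
    and S :: "nat set" and Xk Mk Xk1 :: "real^'k" and t :: "nat \<Rightarrow> real"
  assumes blocks: "block_structure b m n blk pos"
    and norms: "\<forall>i<b. is_norm_on (m i) (n i) (nrm i)"
    and diff: "\<forall>X. f differentiable (at X)"
    and cont: "continuous_on UNIV (grad f)"
    and D_sub: "\<forall>T\<in>set_pmf D. T \<subseteq> {..<b}"
    and L_nonneg: "\<forall>T\<in>set_pmf D. \<forall>i\<in>T. 0 \<le> L0 i T \<and> 0 \<le> L1 i T"
    and smooth: "\<forall>T\<in>set_pmf D. \<forall>i\<in>T. \<forall>X \<Gamma>. (\<forall>k. blk k \<notin> T \<longrightarrow> \<Gamma> $ k = 0) \<longrightarrow>
        dual_norm (m i) (n i) (nrm i)
          (\<lambda>r c. block blk pos (grad f (X + \<Gamma>)) i r c - block blk pos (grad f X) i r c)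
        \<le> (L0 i T + L1 i T * dual_norm (m i) (n i) (nrm i) (block blk pos (grad f X) i))
           * nrm i (block blk pos \<Gamma> i)"
    and S_supp: "S \<in> set_pmf D"
    and t_pos: "\<forall>i\<in>S. 0 < t i"
    and step_in: "\<forall>i\<in>S. is_lmo (m i) (n i)
        (norm_ball (m i) (n i) (nrm i) (block blk pos Xk i) (t i))
        (block blk pos Mk i) (block blk pos Xk1 i)"
    and step_out: "\<forall>i<b. i \<notin> S \<longrightarrow> block blk pos Xk1 i = block blk pos Xk i"
  shows "f Xk1 \<le> f Xk
      + (\<Sum>i\<in>S. 2 * t i * dual_norm (m i) (n i) (nrm i)
                     (\<lambda>r c. block blk pos (grad f Xk) i r c - block blk pos Mk i r c))
      - (\<Sum>i\<in>S. t i * dual_norm (m i) (n i) (nrm i) (block blk pos (grad f Xk) i))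
      + (\<Sum>i\<in>S. (L0 i S + L1 i S * dual_norm (m i) (n i) (nrm i) (block blk pos (grad f Xk) i)) / 2
                 * (t i)^2)"
proof -
  have Sb: "S \<subseteq> {..<b}" using D_sub S_supp by auto
  define \<Gamma> where "\<Gamma> = Xk1 - Xk"
  have X1: "Xk1 = Xk + \<Gamma>" unfolding \<Gamma>_def by simp
  have G: "\<forall>k. blk k \<notin> S \<longrightarrow> \<Gamma> $ k = 0"
  proof (intro allI impI)
    fix k assume "blk k \<notin> S"
    moreover have "blk k < b" using blocks unfolding block_structure_def by auto
    ultimately have "block blk pos Xk1 (blk k) = block blk pos Xk (blk k)" using step_out by auto
    hence "block blk pos Xk1 (blk k) (fst (pos k)) (snd (pos k)) = block blk pos Xk (blk k) (fst (pos k)) (snd (pos k))"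
      by simp
    thus "\<Gamma> $ k = 0" unfolding \<Gamma>_def using block_at[OF blocks] by simp
  qed
  define c where "c = (\<lambda>i. L0 i S + L1 i S * dual_norm (m i) (n i) (nrm i) (block blk pos (grad f Xk) i))"
  have desc: "f Xk1 \<le> f Xk + (\<Sum>i\<in>S. tr_inner (m i) (n i) (block blk pos (grad f Xk) i) (block blk pos \<Gamma> i))
     + (\<Sum>i\<in>S. c i / 2 * (nrm i (block blk pos \<Gamma> i))^2)"
    unfolding X1 c_def
    by (rule descent[OF blocks norms diff Sb _ _ G, of "\<lambda>i. L0 i S" "\<lambda>i. L1 i S"])
       (use L_nonneg S_supp smooth in auto)
  have per: "tr_inner (m i) (n i) (block blk pos (grad f Xk) i) (block blk pos \<Gamma> i)
        + c i / 2 * (nrm i (block blk pos \<Gamma> i))^2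
      \<le> 2 * t i * dual_norm (m i) (n i) (nrm i)
                     (\<lambda>r c. block blk pos (grad f Xk) i r c - block blk pos Mk i r c)
        - t i * dual_norm (m i) (n i) (nrm i) (block blk pos (grad f Xk) i)
        + c i / 2 * (t i)^2" if iS: "i \<in> S" for i
  proof -
    have i: "i < b" using iS Sb by auto
    have N: "is_norm_on (m i) (n i) (nrm i)" using norms i by auto
    have M: "block blk pos w i \<in> Mat (m i) (n i)" for w :: "real^'k" using block_Mat[OF blocks i] .
    have t0: "0 < t i" using t_pos iS by auto
    define g where "g = block blk pos (grad f Xk) i"
    define Mm where "Mm = block blk pos Mk i"
    define x where "x = block blk pos Xk i"
    define x1 where "x1 = block blk pos Xk1 i"
    define \<Delta> where "\<Delta> = block blk pos \<Gamma> i"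
    define gM where "gM = (\<lambda>r c. g r c - Mm r c)"
    have gMM: "gM \<in> Mat (m i) (n i)" unfolding gM_def g_def Mm_def by (intro Mat_diff M)
    have D_eq: "\<Delta> = (\<lambda>r c. x1 r c - x r c)" unfolding \<Delta>_def \<Gamma>_def x1_def x_def by (rule block_diff)
    have lmo: "is_lmo (m i) (n i) (norm_ball (m i) (n i) (nrm i) x (t i)) Mm x1"
      using step_in iS unfolding x_def Mm_def x1_def by auto
    have nD: "nrm i \<Delta> \<le> t i" using lmo unfolding is_lmo_def norm_ball_def D_eq by auto
    have nD0: "0 \<le> nrm i \<Delta>" unfolding \<Delta>_def by (rule N_nonneg[OF N M])
    have c0: "0 \<le> c i" unfolding c_def using L_nonneg S_supp iS dn_nonneg[OF blocks i N M] by auto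
    have sq: "(nrm i \<Delta>)^2 \<le> (t i)^2" using nD nD0 by (rule power_mono)
    have q: "c i / 2 * (nrm i \<Delta>)^2 \<le> c i / 2 * (t i)^2" using sq c0 by (simp add: mult_left_mono)
    have split: "tr_inner (m i) (n i) g \<Delta> = tr_inner (m i) (n i) gM \<Delta> + tr_inner (m i) (n i) Mm \<Delta>"
      unfolding gM_def tr_inner_diff_left by simp
    have a1: "tr_inner (m i) (n i) gM \<Delta> \<le> dual_norm (m i) (n i) (nrm i) gM * t i"
    proof -
      have "tr_inner (m i) (n i) gM \<Delta> \<le> dual_norm (m i) (n i) (nrm i) gM * nrm i \<Delta>"
        unfolding \<Delta>_def by (rule dn_mult[OF blocks i N gMM M])
      also have "\<dots> \<le> dual_norm (m i) (n i) (nrm i) gM * t i"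
        using nD dn_nonneg[OF blocks i N gMM] by (simp add: mult_left_mono)
      finally show ?thesis .
    qed
    have "dual_norm (m i) (n i) (nrm i) Mm \<le> - tr_inner (m i) (n i) Mm \<Delta> / t i"
    proof (rule dn_least[OF _ N], intro ballI impI)
      fix Z assume Z: "Z \<in> Mat (m i) (n i)" and NZ: "nrm i Z \<le> 1"
      define W where "W = (\<lambda>r c. x r c - t i * Z r c)"
      have WM: "W \<in> Mat (m i) (n i)" unfolding W_def x_def by (intro Mat_diff M Mat_scale Z)
      have "nrm i (\<lambda>r c. W r c - x r c) = nrm i (\<lambda>r c. (- t i) * Z r c)" unfolding W_def by simp
      also have "\<dots> = t i * nrm i Z" using N_scale[OF N Z, of "- t i"] t0 by simp
      also have "\<dots> \<le> t i" using NZ t0 by simp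
      finally have "W \<in> norm_ball (m i) (n i) (nrm i) x (t i)" unfolding norm_ball_def using WM by auto
      hence "tr_inner (m i) (n i) Mm x1 \<le> tr_inner (m i) (n i) Mm W" using lmo unfolding is_lmo_def by auto
      moreover have "tr_inner (m i) (n i) Mm W = tr_inner (m i) (n i) Mm x - t i * tr_inner (m i) (n i) Mm Z"
        unfolding W_def tr_inner_diff_right tr_inner_scale_right by simp
      moreover have "tr_inner (m i) (n i) Mm \<Delta> = tr_inner (m i) (n i) Mm x1 - tr_inner (m i) (n i) Mm x"
        unfolding D_eq tr_inner_diff_right by simp
      ultimately have "t i * tr_inner (m i) (n i) Mm Z \<le> - tr_inner (m i) (n i) Mm \<Delta>" by linarith
      thus "tr_inner (m i) (n i) Mm Z \<le> - tr_inner (m i) (n i) Mm \<Delta> / t i"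
        using t0 by (simp add: field_simps)
    qed
    hence a2: "tr_inner (m i) (n i) Mm \<Delta> \<le> - t i * dual_norm (m i) (n i) (nrm i) Mm"
      using t0 by (simp add: field_simps)
    have "dual_norm (m i) (n i) (nrm i) g \<le> dual_norm (m i) (n i) (nrm i) gM + dual_norm (m i) (n i) (nrm i) Mm"
    proof (rule dn_least[OF _ N], intro ballI impI)
      fix Z assume Z: "Z \<in> Mat (m i) (n i)" and NZ: "nrm i Z \<le> 1"
      have "tr_inner (m i) (n i) g Z = tr_inner (m i) (n i) gM Z + tr_inner (m i) (n i) Mm Z"
        unfolding gM_def tr_inner_diff_left by simp
      thus "tr_inner (m i) (n i) g Z \<le> dual_norm (m i) (n i) (nrm i) gM + dual_norm (m i) (n i) (nrm i) Mm"
        using dn_upper[OF blocks i N gMM Z NZ] dn_upper[OF blocks i N M Z NZ, of Mk] unfolding Mm_def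
        by linarith
    qed
    hence a3: "t i * dual_norm (m i) (n i) (nrm i) g \<le> t i * dual_norm (m i) (n i) (nrm i) gM + t i * dual_norm (m i) (n i) (nrm i) Mm"
      using t0 by (simp add: distrib_left[symmetric] mult_left_mono)
    have "tr_inner (m i) (n i) g \<Delta> + c i / 2 * (nrm i \<Delta>)^2
        \<le> 2 * t i * dual_norm (m i) (n i) (nrm i) gM - t i * dual_norm (m i) (n i) (nrm i) g + c i / 2 * (t i)^2"
      using split a1 a2 a3 q by (simp add: algebra_simps)
    thus ?thesis unfolding g_def Mm_def \<Delta>_def gM_def .
  qed
  have "(\<Sum>i\<in>S. tr_inner (m i) (n i) (block blk pos (grad f Xk) i) (block blk pos \<Gamma> i))
     + (\<Sum>i\<in>S. c i / 2 * (nrm i (block blk pos \<Gamma> i))^2)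
     \<le> (\<Sum>i\<in>S. 2 * t i * dual_norm (m i) (n i) (nrm i)
                     (\<lambda>r c. block blk pos (grad f Xk) i r c - block blk pos Mk i r c)
        - t i * dual_norm (m i) (n i) (nrm i) (block blk pos (grad f Xk) i)
        + c i / 2 * (t i)^2)"
    unfolding sum.distrib[symmetric] by (rule sum_mono) (rule per)
  also have "\<dots> = (\<Sum>i\<in>S. 2 * t i * dual_norm (m i) (n i) (nrm i)
                     (\<lambda>r c. block blk pos (grad f Xk) i r c - block blk pos Mk i r c))
      - (\<Sum>i\<in>S. t i * dual_norm (m i) (n i) (nrm i) (block blk pos (grad f Xk) i))
      + (\<Sum>i\<in>S. c i / 2 * (t i)^2)"
    by (simp add: sum.distrib sum_subtractf)
  finally show ?thesis using desc unfolding c_def by linarith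
qed

end
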